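(* For all $\boldsymbol\xi,\boldsymbol\xi'\in P_{II}$: $\mathcal D_{\boldsymbol\xi\text{-unc}}\cup\mathcal D_{\boldsymbol\xi'\text{-unc}}=\mathcal D_{(\boldsymbol\xi\cup\boldsymbol\xi')\text{-unc}}$ and $\mathcal D_{\boldsymbol\xi\text{-unc}}\cap\mathcal D_{\boldsymbol\xi'\text{-unc}}=\mathcal D_{(\boldsymbol\xi\cap\boldsymbol\xi')\text{-unc}}$ (here $\boldsymbol\xi\cup\boldsymbol\xi'$ and $\boldsymbol\xi\cap\boldsymbol\xi'$ are the join and meet in $P_{II}$).
   Context: Let $n\ge1$, $L=\{1,\dots,n\}$, and for $i\in L$ let $\mathcal H_i$ be a Hilbert space with $1<\dim\mathcal H_i<\infty$; $\mathcal H_X=\bigotimes_{i\in X}\mathcal H_i$ and $\mathcal D_X$ is the set of density operators on $\mathcal H_X$. $P_I$ is the set of partitions of $L$ ordered by refinement. For $\xi\in P_I$, $\mathcal D_{\xi\text{-unc}}=\{\varrho\in\mathcal D_L:\varrho=\bigotimes_{X\in\xi}\varrho_X,\ \varrho_X\in\mathcal D_X\}$. $P_{II}$ is the set of nonempty down-sets of $(P_I,\preceq)$, ordered by inclusion (a lattice with meet $\cap$ and join $\cup$), and for $\boldsymbol\xi\in P_{II}$, $\mathcal D_{\boldsymbol\xi\text{-unc}}=\bigcup_{\xi\in\boldsymbol\xi}\mathcal D_{\xi\text{-unc}}$. *)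

theory Defs
  imports "HOL-Analysis.Analysis" "HOL-Library.Disjoint_Sets" "HOL-Library.Complex_Order"
begin

text \<open>Concrete model: H_i = C^(d i), with orthonormal basis indexed by {..< d i}.
  The product basis of H_X is indexed by the extensional functions in
  PiE X (\<lambda>i. {..< d i}). An operator on H_X is represented by its matrix
  kernel (f, g) \<mapsto> <e_f, A e_g>, required to vanish outside the basis index set.\<close>

type_synonym opr = "(nat \<Rightarrow> nat) \<Rightarrow> (nat \<Rightarrow> nat) \<Rightarrow> complex"

definition basis_idx :: "(nat \<Rightarrow> nat) \<Rightarrow> nat set \<Rightarrow> (nat \<Rightarrow> nat) set" where
  "basis_idx d X = PiE X (\<lambda>i. {..< d i})"

definition supported_on :: "(nat \<Rightarrow> nat) \<Rightarrow> nat set \<Rightarrow> opr \<Rightarrow> bool" where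
  "supported_on d X A \<longleftrightarrow>
     (\<forall>f g. f \<notin> basis_idx d X \<or> g \<notin> basis_idx d X \<longrightarrow> A f g = 0)"

definition positive_op :: "(nat \<Rightarrow> nat) \<Rightarrow> nat set \<Rightarrow> opr \<Rightarrow> bool" where
  "positive_op d X A \<longleftrightarrow>
     (\<forall>v :: (nat \<Rightarrow> nat) \<Rightarrow> complex.
        0 \<le> (\<Sum>f\<in>basis_idx d X. \<Sum>g\<in>basis_idx d X. cnj (v f) * A f g * v g))"

definition trace_op :: "(nat \<Rightarrow> nat) \<Rightarrow> nat set \<Rightarrow> opr \<Rightarrow> complex" where
  "trace_op d X A = (\<Sum>f\<in>basis_idx d X. A f f)"

definition density_ops :: "(nat \<Rightarrow> nat) \<Rightarrow> nat set \<Rightarrow> opr set" where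
  "density_ops d X = {A. supported_on d X A \<and> positive_op d X A \<and> trace_op d X A = 1}"

definition tensor_op :: "(nat \<Rightarrow> nat) \<Rightarrow> nat set \<Rightarrow> nat set set \<Rightarrow> (nat set \<Rightarrow> opr) \<Rightarrow> opr" where
  "tensor_op d L xi As = (\<lambda>f g.
     if f \<in> basis_idx d L \<and> g \<in> basis_idx d L
     then (\<Prod>X\<in>xi. As X (restrict f X) (restrict g X)) else 0)"

definition Lset :: "nat \<Rightarrow> nat set" where
  "Lset n = {1..n}"

definition P_I :: "nat \<Rightarrow> nat set set set" where
  "P_I n = {xi. partition_on (Lset n) xi}"

definition refines :: "nat set set \<Rightarrow> nat set set \<Rightarrow> bool" where
  "refines xi eta \<longleftrightarrow> (\<forall>X\<in>xi. \<exists>Y\<in>eta. X \<subseteq> Y)"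

definition P_II :: "nat \<Rightarrow> nat set set set set" where
  "P_II n = {Xi. Xi \<subseteq> P_I n \<and> Xi \<noteq> {} \<and>
     (\<forall>xi\<in>Xi. \<forall>eta\<in>P_I n. refines eta xi \<longrightarrow> eta \<in> Xi)}"

definition D_unc :: "nat \<Rightarrow> (nat \<Rightarrow> nat) \<Rightarrow> nat set set \<Rightarrow> opr set" where
  "D_unc n d xi = {rho \<in> density_ops d (Lset n).
     \<exists>As. (\<forall>X\<in>xi. As X \<in> density_ops d X) \<and> rho = tensor_op d (Lset n) xi As}"

definition D_unc2 :: "nat \<Rightarrow> (nat \<Rightarrow> nat) \<Rightarrow> nat set set set \<Rightarrow> opr set" where
  "D_unc2 n d Xi = (\<Union>xi\<in>Xi. D_unc n d xi)"

end

theory Submission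
  imports Defs
begin


lemma part_same:
  assumes "partition_on L P" "X \<in> P" "Y \<in> P" "x \<in> X" "x \<in> Y"
  shows "X = Y"
  using assms unfolding partition_on_def disjoint_def disjnt_def by blast

lemma part_sub: "partition_on L P \<Longrightarrow> X \<in> P \<Longrightarrow> X \<subseteq> L"
  unfolding partition_on_def by blast

definition mix :: "nat set \<Rightarrow> (nat\<Rightarrow>nat) \<Rightarrow> (nat\<Rightarrow>nat) \<Rightarrow> (nat\<Rightarrow>nat)" where
  "mix Z f f0 = (\<lambda>i. if i \<in> Z then f i else f0 i)"

lemma mix_in: "f \<in> basis_idx d L \<Longrightarrow> f0 \<in> basis_idx d L \<Longrightarrow> Z \<subseteq> L \<Longrightarrow> mix Z f f0 \<in> basis_idx d L"
  by (auto simp: basis_idx_def mix_def PiE_def extensional_def Pi_def)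

lemma mix_in2: "u \<in> basis_idx d Z \<Longrightarrow> f0 \<in> basis_idx d L \<Longrightarrow> Z \<subseteq> L \<Longrightarrow> mix Z u f0 \<in> basis_idx d L"
  by (auto simp: basis_idx_def mix_def PiE_def extensional_def Pi_def)

lemma mix_mix: "mix Y (mix X f f0) f0 = mix (X \<inter> Y) f f0"
  by (auto simp: mix_def)

lemma mix_empty: "mix {} f f0 = f0"
  by (auto simp: mix_def)

lemma restrict_mix_same: "restrict (mix X f f0) X = restrict f X"
  by (auto simp: mix_def)

lemma restrict_mix_other: "X \<inter> Y = {} \<Longrightarrow> restrict (mix X f f0) Y = restrict f0 Y"
  by (auto simp: mix_def restrict_def fun_eq_iff)

lemma restrict_in: "f \<in> basis_idx d L \<Longrightarrow> Z \<subseteq> L \<Longrightarrow> restrict f Z \<in> basis_idx d Z"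
  by (auto simp: basis_idx_def PiE_def Pi_def)

lemma mix_restrict: "mix Z (restrict f Z) f0 = mix Z f f0"
  by (auto simp: mix_def)

lemma restrict_mix_in: "u \<in> basis_idx d Z \<Longrightarrow> restrict (mix Z u f0) Z = u"
  by (auto simp: mix_def basis_idx_def PiE_def extensional_def restrict_def)

lemma tensor_mix:
  assumes part: "partition_on L xi" and fin: "finite xi"
   and rho: "rho = tensor_op d L xi As"
   and f: "f \<in> basis_idx d L" "g \<in> basis_idx d L" "f0 \<in> basis_idx d L"
  shows "rho f g * rho f0 f0 ^ (card xi - 1) = (\<Prod>X\<in>xi. rho (mix X f f0) (mix X g f0))"
proof -
  define \<alpha> where "\<alpha> X = As X (restrict f X) (restrict g X)" for X
  define a where "a X = As X (restrict f0 X) (restrict f0 X)" for X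
  have 1: "rho (mix X f f0) (mix X g f0) = (\<Prod>X'\<in>xi. if X' = X then \<alpha> X' else a X')" if X: "X \<in> xi" for X
  proof -
    have "rho (mix X f f0) (mix X g f0) = (\<Prod>X'\<in>xi. As X' (restrict (mix X f f0) X') (restrict (mix X g f0) X'))"
      using mix_in[OF f(1) f(3) part_sub[OF part X]] mix_in[OF f(2) f(3) part_sub[OF part X]]
      by (simp add: rho tensor_op_def)
    also have "\<dots> = (\<Prod>X'\<in>xi. if X' = X then \<alpha> X' else a X')"
    proof (rule prod.cong[OF refl])
      fix X' assume X': "X' \<in> xi"
      show "As X' (restrict (mix X f f0) X') (restrict (mix X g f0) X') = (if X' = X then \<alpha> X' else a X')"
      proof (cases "X' = X")
        case True thus ?thesis by (simp add: \<alpha>_def restrict_mix_same)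
      next
        case False
        hence "X \<inter> X' = {}" using part X X' part_same[of L xi X X'] by blast
        thus ?thesis using False by (simp add: a_def restrict_mix_other)
      qed
    qed
    finally show ?thesis .
  qed
  have 2: "(\<Prod>X\<in>xi. if X' = X then \<alpha> X' else a X') = \<alpha> X' * a X' ^ (card xi - 1)" if "X' \<in> xi" for X'
  proof -
    have "(\<Prod>X\<in>xi. if X' = X then \<alpha> X' else a X') = (if X' = X' then \<alpha> X' else a X') * (\<Prod>X\<in>xi-{X'}. if X' = X then \<alpha> X' else a X')"
      using prod.remove[OF fin that] by blast
    also have "(\<Prod>X\<in>xi-{X'}. if X' = X then \<alpha> X' else a X') = (\<Prod>X\<in>xi-{X'}. a X')"
      by (rule prod.cong) auto
    also have "\<dots> = a X' ^ (card xi - 1)" using fin that by (simp add: card_Diff_singleton)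
    finally show ?thesis by simp
  qed
  have "(\<Prod>X\<in>xi. rho (mix X f f0) (mix X g f0)) = (\<Prod>X\<in>xi. \<Prod>X'\<in>xi. if X' = X then \<alpha> X' else a X')"
    using 1 by simp
  also have "\<dots> = (\<Prod>X'\<in>xi. \<Prod>X\<in>xi. if X' = X then \<alpha> X' else a X')"
    by (rule prod.swap)
  also have "\<dots> = (\<Prod>X'\<in>xi. \<alpha> X' * a X' ^ (card xi - 1))"
    using 2 by simp
  also have "\<dots> = (\<Prod>X'\<in>xi. \<alpha> X') * (\<Prod>X'\<in>xi. a X') ^ (card xi - 1)"
    by (simp add: prod.distrib prod_power_distrib)
  also have "(\<Prod>X'\<in>xi. \<alpha> X') = rho f g" using f by (simp add: rho tensor_op_def \<alpha>_def)
  also have "(\<Prod>X'\<in>xi. a X') = rho f0 f0" using f by (simp add: rho tensor_op_def a_def)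
  finally show ?thesis by simp
qed

lemma the_block: "partition_on L P \<Longrightarrow> Z \<in> P \<Longrightarrow> i \<in> Z \<Longrightarrow> (THE Z. Z \<in> P \<and> i \<in> Z) = Z"
  by (rule the_equality) (auto dest: part_same)

lemma sum_tensor:
  fixes F :: "nat set \<Rightarrow> (nat \<Rightarrow> nat) \<Rightarrow> 'a::comm_semiring_1"
  assumes part: "partition_on L M" and fin: "finite L"
  shows "(\<Sum>f\<in>basis_idx d L. \<Prod>Z\<in>M. F Z (restrict f Z)) = (\<Prod>Z\<in>M. \<Sum>u\<in>basis_idx d Z. F Z u)"
proof -
  have finM: "finite M" using part fin by (metis finite_UnionD partition_onD1)
  have finZ: "finite (basis_idx d Z)" if "Z \<in> M" for Z
  proof -
    have "finite Z" using part_sub[OF part that] fin finite_subset by blast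
    thus ?thesis unfolding basis_idx_def by (intro finite_PiE) auto
  qed
  have "(\<Prod>Z\<in>M. \<Sum>u\<in>basis_idx d Z. F Z u) = (\<Sum>G\<in>PiE M (\<lambda>Z. basis_idx d Z). \<Prod>Z\<in>M. F Z (G Z))"
    using prod_sum_PiE[of M "\<lambda>Z. basis_idx d Z" F] finM finZ by blast
  also have "\<dots> = (\<Sum>f\<in>basis_idx d L. \<Prod>Z\<in>M. F Z (restrict f Z))"
  proof (rule sum.reindex_bij_witness[of _ "\<lambda>f. (\<lambda>Z\<in>M. restrict f Z)"
        "\<lambda>G. (\<lambda>i. if i \<in> L then G (THE Z. Z \<in> M \<and> i \<in> Z) i else undefined)"])
    fix f assume f: "f \<in> basis_idx d L"
    show "(\<lambda>i. if i \<in> L then (\<lambda>Z\<in>M. restrict f Z) (THE Z. Z \<in> M \<and> i \<in> Z) i else undefined) = f"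
    proof
      fix i show "(if i \<in> L then (\<lambda>Z\<in>M. restrict f Z) (THE Z. Z \<in> M \<and> i \<in> Z) i else undefined) = f i"
      proof (cases "i \<in> L")
        case True
        then obtain Z where Z: "Z \<in> M" "i \<in> Z" using part partition_onD1 by blast
        thus ?thesis using the_block[OF part Z] True by simp
      next
        case False thus ?thesis using f by (auto simp: basis_idx_def PiE_def extensional_def)
      qed
    qed
    show "(\<lambda>Z\<in>M. restrict f Z) \<in> PiE M (\<lambda>Z. basis_idx d Z)"
      using f restrict_in part_sub[OF part] by auto
  next
    fix G assume G: "G \<in> PiE M (\<lambda>Z. basis_idx d Z)"
    let ?f = "(\<lambda>i. if i \<in> L then G (THE Z. Z \<in> M \<and> i \<in> Z) i else undefined)"
    have eq: "restrict ?f Z = G Z" if Z: "Z \<in> M" for Z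
    proof
      fix i show "restrict ?f Z i = G Z i"
      proof (cases "i \<in> Z")
        case True
        thus ?thesis using the_block[OF part Z True] part_sub[OF part Z] by auto
      next
        case False
        have "G Z \<in> basis_idx d Z" using G Z by auto
        thus ?thesis using False by (auto simp: basis_idx_def PiE_def extensional_def)
      qed
    qed
    show "(\<lambda>Z\<in>M. restrict ?f Z) = G"
    proof
      fix Z show "(\<lambda>Z\<in>M. restrict ?f Z) Z = G Z"
        using eq G by (cases "Z \<in> M") (auto simp: PiE_def extensional_def)
    qed
    show "(\<Prod>Z\<in>M. F Z (restrict ?f Z)) = (\<Prod>Z\<in>M. F Z (G Z))"
      using eq by simp
    show "?f \<in> basis_idx d L"
      unfolding basis_idx_def
    proof (rule PiE_I)
      fix i assume i: "i \<in> L"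
      then obtain Z where Z: "Z \<in> M" "i \<in> Z" using part partition_onD1 by blast
      have "G Z \<in> basis_idx d Z" using G Z by auto
      thus "?f i \<in> {..<d i}" using the_block[OF part Z] i Z by (auto simp: basis_idx_def)
    qed auto
  qed
  finally show ?thesis by simp
qed

lemma diag_nonneg:
  assumes "positive_op d L A" "f \<in> basis_idx d L" "finite L"
  shows "0 \<le> A f f"
proof -
  have fin: "finite (basis_idx d L)" using assms(3) unfolding basis_idx_def by (intro finite_PiE) auto
  have "0 \<le> (\<Sum>h\<in>basis_idx d L. \<Sum>g\<in>basis_idx d L. cnj (if h = f then 1 else 0) * A h g * (if g = f then 1 else 0))"
    using assms(1)[unfolded positive_op_def, THEN spec, of "\<lambda>h. if h = f then 1 else 0"] by simp
  also have "\<dots> = (\<Sum>h\<in>basis_idx d L. \<Sum>g\<in>basis_idx d L. if h = f \<and> g = f then A h g else 0)"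
    by (intro sum.cong refl) auto
  also have "\<dots> = A f f" using assms(2) fin
  proof -
    have "(\<Sum>h\<in>basis_idx d L. \<Sum>g\<in>basis_idx d L. if h = f \<and> g = f then A h g else 0)
      = (\<Sum>h\<in>basis_idx d L. if h = f then A h f else 0)"
      using fin assms(2) by (intro sum.cong refl) (auto simp: sum.delta)
    thus ?thesis using fin assms(2) by (simp add: sum.delta)
  qed
  finally show ?thesis .
qed

lemma compress_pos:
  assumes pos: "positive_op d L rho" and Z: "Z \<subseteq> L" and f0: "f0 \<in> basis_idx d L"
    and finL: "finite L"
  shows "0 \<le> (\<Sum>u\<in>basis_idx d Z. \<Sum>v\<in>basis_idx d Z. cnj (w u) * rho (mix Z u f0) (mix Z v f0) * w v)"
proof -
  define S where "S = (\<lambda>u. mix Z u f0) ` basis_idx d Z"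
  define V where "V f = (if f \<in> S then w (restrict f Z) else 0)" for f
  have fin: "finite (basis_idx d L)" using finL unfolding basis_idx_def by (intro finite_PiE) auto
  have SL: "S \<subseteq> basis_idx d L" using mix_in2[OF _ f0 Z] S_def by auto
  have inj: "inj_on (\<lambda>u. mix Z u f0) (basis_idx d Z)"
    by (metis (no_types, lifting) inj_onI restrict_mix_in)
  have VS: "V (mix Z u f0) = w u" if "u \<in> basis_idx d Z" for u
    using that by (auto simp: V_def S_def restrict_mix_in)
  have "0 \<le> (\<Sum>f\<in>basis_idx d L. \<Sum>g\<in>basis_idx d L. cnj (V f) * rho f g * V g)"
    using pos[unfolded positive_op_def, THEN spec, of V] by simp
  also have "\<dots> = (\<Sum>f\<in>S. \<Sum>g\<in>basis_idx d L. cnj (V f) * rho f g * V g)"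
    using SL fin by (intro sum.mono_neutral_right) (auto simp: V_def)
  also have "\<dots> = (\<Sum>f\<in>S. \<Sum>g\<in>S. cnj (V f) * rho f g * V g)"
    using SL fin by (intro sum.cong refl sum.mono_neutral_right) (auto simp: V_def)
  also have "\<dots> = (\<Sum>u\<in>basis_idx d Z. \<Sum>v\<in>basis_idx d Z. cnj (w u) * rho (mix Z u f0) (mix Z v f0) * w v)"
    unfolding S_def using inj by (simp add: sum.reindex VS)
  finally show ?thesis .
qed



lemma div_nonneg_complex: "0 \<le> (a::complex) \<Longrightarrow> 0 < t \<Longrightarrow> 0 \<le> a / t"
  by (auto simp: less_eq_complex_def less_complex_def Re_divide Im_divide)

lemma meet_partition:
  assumes p1: "partition_on L xi" and p2: "partition_on L xi'"
  shows "partition_on L {X \<inter> Y | X Y. X \<in> xi \<and> Y \<in> xi' \<and> X \<inter> Y \<noteq> {}}"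
proof (rule partition_onI)
  show "\<Union>{X \<inter> Y | X Y. X \<in> xi \<and> Y \<in> xi' \<and> X \<inter> Y \<noteq> {}} = L"
  proof
    show "\<Union>{X \<inter> Y | X Y. X \<in> xi \<and> Y \<in> xi' \<and> X \<inter> Y \<noteq> {}} \<subseteq> L"
      using part_sub[OF p1] by blast
    show "L \<subseteq> \<Union>{X \<inter> Y | X Y. X \<in> xi \<and> Y \<in> xi' \<and> X \<inter> Y \<noteq> {}}"
    proof
      fix i assume "i \<in> L"
      then obtain X Y where "X \<in> xi" "Y \<in> xi'" "i \<in> X" "i \<in> Y"
        using partition_onD1[OF p1] partition_onD1[OF p2] by blast
      thus "i \<in> \<Union>{X \<inter> Y | X Y. X \<in> xi \<and> Y \<in> xi' \<and> X \<inter> Y \<noteq> {}}" by blast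
    qed
  qed
  fix p q assume p: "p \<in> {X \<inter> Y | X Y. X \<in> xi \<and> Y \<in> xi' \<and> X \<inter> Y \<noteq> {}}"
    and q: "q \<in> {X \<inter> Y | X Y. X \<in> xi \<and> Y \<in> xi' \<and> X \<inter> Y \<noteq> {}}" and pq: "p \<noteq> q"
  then obtain X Y X' Y' where "p = X \<inter> Y" "q = X' \<inter> Y'" "X \<in> xi" "Y \<in> xi'" "X' \<in> xi" "Y' \<in> xi'"
    by blast
  thus "disjnt p q" using pq part_same[OF p1] part_same[OF p2] unfolding disjnt_def by blast
qed auto

lemma meet_unc:
  assumes p1: "partition_on L xi" and p2: "partition_on L xi'" and finL: "finite L"
    and dens: "rho \<in> density_ops d L"
    and t1: "rho = tensor_op d L xi As" and t2: "rho = tensor_op d L xi' Bs"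
    and M_def: "M = {X \<inter> Y | X Y. X \<in> xi \<and> Y \<in> xi' \<and> X \<inter> Y \<noteq> {}}"
  shows "\<exists>Cs. (\<forall>Z\<in>M. Cs Z \<in> density_ops d Z) \<and> rho = tensor_op d L M Cs"
proof -
  have fin1: "finite xi" using p1 finL by (metis finite_UnionD partition_onD1)
  have fin2: "finite xi'" using p2 finL by (metis finite_UnionD partition_onD1)
  have pM: "partition_on L M" unfolding M_def by (rule meet_partition[OF p1 p2])
  have finM: "finite M" using pM finL by (metis finite_UnionD partition_onD1)
  have finB: "finite (basis_idx d L)" using finL unfolding basis_idx_def by (intro finite_PiE) auto
  have tr: "(\<Sum>f\<in>basis_idx d L. rho f f) = 1" and pos: "positive_op d L rho"
    and sup: "supported_on d L rho"
    using dens by (simp_all add: density_ops_def trace_op_def)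
  have "\<exists>f0\<in>basis_idx d L. rho f0 f0 \<noteq> 0"
  proof (rule ccontr)
    assume "\<not> ?thesis"
    hence "(\<Sum>f\<in>basis_idx d L. rho f f) = 0" by simp
    thus False using tr by simp
  qed
  then obtain f0 where f0: "f0 \<in> basis_idx d L" "rho f0 f0 \<noteq> 0" by blast
  define c where "c = rho f0 f0"
  have c0: "c \<noteq> 0" using f0 c_def by simp
  have cpos: "0 < c" using diag_nonneg[OF pos f0(1) finL] c0 c_def by (simp add: order_less_le)
  define G where "G f g W = rho (mix W f f0) (mix W g f0)" for f g W
  define E where "E = {p \<in> xi \<times> xi'. fst p \<inter> snd p = {}}"
  define N where "N = {p \<in> xi \<times> xi'. fst p \<inter> snd p \<noteq> {}}"
  define k1 where "k1 = card xi - 1"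
  define k2 where "k2 = card xi' - 1"
  have key: "rho f g * c ^ k1 * c ^ (k2 * card xi) = c ^ card E * (\<Prod>Z\<in>M. G f g Z)"
    if f: "f \<in> basis_idx d L" and g: "g \<in> basis_idx d L" for f g
  proof -
    have s1: "rho f g * c ^ k1 = (\<Prod>X\<in>xi. rho (mix X f f0) (mix X g f0))"
      using tensor_mix[OF p1 fin1 t1 f g f0(1)] by (simp add: c_def k1_def)
    have s2: "rho (mix X f f0) (mix X g f0) * c ^ k2 = (\<Prod>Y\<in>xi'. G f g (X \<inter> Y))" if X: "X \<in> xi" for X
      using tensor_mix[OF p2 fin2 t2 mix_in[OF f f0(1) part_sub[OF p1 X]] mix_in[OF g f0(1) part_sub[OF p1 X]] f0(1)]
      by (simp add: c_def k2_def G_def mix_mix)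
    have "rho f g * c ^ k1 * c ^ (k2 * card xi) = (\<Prod>X\<in>xi. rho (mix X f f0) (mix X g f0)) * (\<Prod>X\<in>xi. c ^ k2)"
      using s1 by (simp add: power_mult)
    also have "\<dots> = (\<Prod>X\<in>xi. rho (mix X f f0) (mix X g f0) * c ^ k2)"
      by (simp add: prod.distrib)
    also have "\<dots> = (\<Prod>X\<in>xi. \<Prod>Y\<in>xi'. G f g (X \<inter> Y))"
      using s2 by simp
    also have "\<dots> = (\<Prod>p\<in>xi \<times> xi'. G f g (fst p \<inter> snd p))"
      by (simp add: prod.cartesian_product case_prod_beta)
    also have "xi \<times> xi' = E \<union> N" by (auto simp: E_def N_def)
    also have "(\<Prod>p\<in>E \<union> N. G f g (fst p \<inter> snd p)) = (\<Prod>p\<in>E. G f g (fst p \<inter> snd p)) * (\<Prod>p\<in>N. G f g (fst p \<inter> snd p))"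
      using fin1 fin2 by (intro prod.union_disjoint) (auto simp: E_def N_def)
    also have "(\<Prod>p\<in>E. G f g (fst p \<inter> snd p)) = c ^ card E"
      by (simp add: E_def G_def mix_empty c_def)
    also have "(\<Prod>p\<in>N. G f g (fst p \<inter> snd p)) = (\<Prod>Z\<in>M. G f g Z)"
    proof -
      have inj: "inj_on (\<lambda>p. fst p \<inter> snd p) N"
      proof (rule inj_onI)
        fix p q assume p: "p \<in> N" and q: "q \<in> N" and eq: "fst p \<inter> snd p = fst q \<inter> snd q"
        then obtain i where i: "i \<in> fst p" "i \<in> snd p" "i \<in> fst q" "i \<in> snd q" unfolding N_def by blast
        have "fst p = fst q" using part_same[OF p1 _ _ i(1) i(3)] p q unfolding N_def by auto
        moreover have "snd p = snd q" using part_same[OF p2 _ _ i(2) i(4)] p q unfolding N_def by auto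
        ultimately show "p = q" by (simp add: prod_eq_iff)
      qed
      have img: "(\<lambda>p. fst p \<inter> snd p) ` N = M" unfolding M_def N_def by force
      show ?thesis using prod.reindex[OF inj, of "G f g"] img by simp
    qed
    finally show ?thesis .
  qed
  define K where "K = c ^ card E / (c ^ k1 * c ^ (k2 * card xi))"
  have key2: "rho f g = K * (\<Prod>Z\<in>M. G f g Z)"
    if f: "f \<in> basis_idx d L" and g: "g \<in> basis_idx d L" for f g
    using key[OF f g] c0 unfolding K_def by (simp add: field_simps)
  define t where "t Z = (\<Sum>u\<in>basis_idx d Z. rho (mix Z u f0) (mix Z u f0))" for Z
  have tpos: "0 < t Z" if Z: "Z \<in> M" for Z
  proof -
    have ZL: "Z \<subseteq> L" using part_sub[OF pM Z] .
    have finZ: "finite (basis_idx d Z)" using finL ZL finite_subset unfolding basis_idx_def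
      by (intro finite_PiE) auto
    have r: "restrict f0 Z \<in> basis_idx d Z" using restrict_in[OF f0(1) ZL] .
    have "c = rho (mix Z (restrict f0 Z) f0) (mix Z (restrict f0 Z) f0)"
    proof -
      have "mix Z (restrict f0 Z) f0 = f0" by (auto simp: mix_def fun_eq_iff)
      thus ?thesis by (simp add: c_def)
    qed
    also have "\<dots> \<le> t Z" unfolding t_def
      by (rule member_le_sum[OF r]) (use finZ diag_nonneg[OF pos mix_in2[OF _ f0(1) ZL] finL] in auto)
    finally show ?thesis using cpos by simp
  qed
  define C where "C Z u v = (if u \<in> basis_idx d Z \<and> v \<in> basis_idx d Z then rho (mix Z u f0) (mix Z v f0) / t Z else 0)" for Z u v
  have Cdens: "C Z \<in> density_ops d Z" if Z: "Z \<in> M" for Z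
  proof -
    have ZL: "Z \<subseteq> L" using part_sub[OF pM Z] .
    have tZ: "t Z \<noteq> 0" using tpos[OF Z] by auto
    have "supported_on d Z (C Z)" by (auto simp: supported_on_def C_def)
    moreover have "positive_op d Z (C Z)" unfolding positive_op_def
    proof
      fix w :: "(nat \<Rightarrow> nat) \<Rightarrow> complex"
      have "(\<Sum>f\<in>basis_idx d Z. \<Sum>g\<in>basis_idx d Z. cnj (w f) * C Z f g * w g)
        = (\<Sum>u\<in>basis_idx d Z. \<Sum>v\<in>basis_idx d Z. cnj (w u) * rho (mix Z u f0) (mix Z v f0) * w v) / t Z"
        by (simp add: C_def sum_divide_distrib)
      also have "0 \<le> \<dots>" by (rule div_nonneg_complex[OF compress_pos[OF pos ZL f0(1) finL] tpos[OF Z]])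
      finally show "0 \<le> (\<Sum>f\<in>basis_idx d Z. \<Sum>g\<in>basis_idx d Z. cnj (w f) * C Z f g * w g)" .
    qed
    moreover have "trace_op d Z (C Z) = 1"
      using tZ by (simp add: trace_op_def C_def t_def sum_divide_distrib[symmetric])
    ultimately show ?thesis by (simp add: density_ops_def)
  qed
  define K' where "K' = K * (\<Prod>Z\<in>M. t Z)"
  have key3: "rho f g = K' * (\<Prod>Z\<in>M. C Z (restrict f Z) (restrict g Z))"
    if f: "f \<in> basis_idx d L" and g: "g \<in> basis_idx d L" for f g
  proof -
    have "(\<Prod>Z\<in>M. G f g Z) = (\<Prod>Z\<in>M. t Z * C Z (restrict f Z) (restrict g Z))"
    proof (rule prod.cong[OF refl])
      fix Z assume Z: "Z \<in> M"
      have ZL: "Z \<subseteq> L" using part_sub[OF pM Z] .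
      show "G f g Z = t Z * C Z (restrict f Z) (restrict g Z)"
        using restrict_in[OF f ZL] restrict_in[OF g ZL] tpos[OF Z]
        by (simp add: G_def C_def mix_restrict)
    qed
    thus ?thesis using key2[OF f g] by (simp add: K'_def prod.distrib)
  qed
  have "1 = (\<Sum>f\<in>basis_idx d L. K' * (\<Prod>Z\<in>M. C Z (restrict f Z) (restrict f Z)))"
    using tr key3 by simp
  also have "\<dots> = K' * (\<Prod>Z\<in>M. \<Sum>u\<in>basis_idx d Z. C Z u u)"
    using sum_tensor[OF pM finL, where F="\<lambda>Z u. C Z u u" and d=d] by (simp only: sum_distrib_left[symmetric])
  also have "(\<Prod>Z\<in>M. \<Sum>u\<in>basis_idx d Z. C Z u u) = 1"
    using Cdens by (intro prod.neutral) (auto simp: density_ops_def trace_op_def)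
  finally have K'1: "K' = 1" by simp
  have "rho = tensor_op d L M C"
  proof (intro ext)
    fix f g
    show "rho f g = tensor_op d L M C f g"
      using key3 K'1 sup by (auto simp: tensor_op_def supported_on_def)
  qed
  thus ?thesis using Cdens by blast
qed


theorem mainTheorem19:
  fixes n :: nat and d :: "nat \<Rightarrow> nat" and Xi Xi' :: "nat set set set"
  assumes "n \<ge> 1"
    and "\<forall>i\<in>Lset n. 1 < d i"
    and "Xi \<in> P_II n" and "Xi' \<in> P_II n"
  shows "D_unc2 n d Xi \<union> D_unc2 n d Xi' = D_unc2 n d (Xi \<union> Xi')
     \<and> D_unc2 n d Xi \<inter> D_unc2 n d Xi' = D_unc2 n d (Xi \<inter> Xi')"
proof
  show "D_unc2 n d Xi \<union> D_unc2 n d Xi' = D_unc2 n d (Xi \<union> Xi')"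
    by (simp add: D_unc2_def)
  show "D_unc2 n d Xi \<inter> D_unc2 n d Xi' = D_unc2 n d (Xi \<inter> Xi')"
  proof
    show "D_unc2 n d (Xi \<inter> Xi') \<subseteq> D_unc2 n d Xi \<inter> D_unc2 n d Xi'"
      by (auto simp: D_unc2_def)
    show "D_unc2 n d Xi \<inter> D_unc2 n d Xi' \<subseteq> D_unc2 n d (Xi \<inter> Xi')"
    proof
      fix rho assume "rho \<in> D_unc2 n d Xi \<inter> D_unc2 n d Xi'"
      then obtain xi xi' where xi: "xi \<in> Xi" "rho \<in> D_unc n d xi" and xi': "xi' \<in> Xi'" "rho \<in> D_unc n d xi'"
        by (auto simp: D_unc2_def)
      obtain As where As: "\<forall>X\<in>xi. As X \<in> density_ops d X" "rho = tensor_op d (Lset n) xi As"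
        and dens: "rho \<in> density_ops d (Lset n)"
        using xi(2) by (auto simp: D_unc_def)
      obtain Bs where Bs: "\<forall>X\<in>xi'. Bs X \<in> density_ops d X" "rho = tensor_op d (Lset n) xi' Bs"
        using xi'(2) by (auto simp: D_unc_def)
      have p1: "partition_on (Lset n) xi" using xi(1) assms(3) by (auto simp: P_II_def P_I_def)
      have p2: "partition_on (Lset n) xi'" using xi'(1) assms(4) by (auto simp: P_II_def P_I_def)
      have finL: "finite (Lset n)" by (simp add: Lset_def)
      define M where "M = {X \<inter> Y | X Y. X \<in> xi \<and> Y \<in> xi' \<and> X \<inter> Y \<noteq> {}}"
      obtain Cs where Cs: "\<forall>Z\<in>M. Cs Z \<in> density_ops d Z" "rho = tensor_op d (Lset n) M Cs"
        using meet_unc[OF p1 p2 finL dens As(2) Bs(2) M_def] by blast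
      have pM: "M \<in> P_I n" using meet_partition[OF p1 p2] by (simp add: P_I_def M_def)
      have r1: "refines M xi" unfolding refines_def M_def by blast
      have r2: "refines M xi'" unfolding refines_def M_def by blast
      have "M \<in> Xi" using assms(3) xi(1) pM r1 unfolding P_II_def by blast
      moreover have "M \<in> Xi'" using assms(4) xi'(1) pM r2 unfolding P_II_def by blast
      moreover have "rho \<in> D_unc n d M" using Cs dens by (auto simp: D_unc_def)
      ultimately show "rho \<in> D_unc2 n d (Xi \<inter> Xi')" by (auto simp: D_unc2_def)
    qed
  qed
qed

end
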